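(* In the setting below, let $E$ and $E'$ be two bases of $q$-singular vectors indexed by the same totally ordered set $I$, and define $\Delta_{E,E'}:V^{\overline S}\to V^{\overline S}$ by $\Delta_{E,E'}(x+\bar r)=x+\theta(\delta_{E,E'}(x))+\bar r$ for $x\in V$, $\bar r\in\overline S$. Then $\Delta_{E,E'}$ is a bijective $K$-linear map fixing $\overline S$ elementwise, and $q_E^{\overline S,\overline T}(v)=q_{E'}^{\overline S,\overline T}(\Delta_{E,E'}(v))$ for all $v\in V^{\overline S}$; in particular $q_E^{\overline S,\overline T}$ and $q_{E'}^{\overline S,\overline T}$ are isomorphic.
   Context: Setting: $K$ division ring, $(\sigma,\varepsilon)$ admissible pair ($\sigma$ anti-automorphism, $\varepsilon^\sigma\varepsilon=1$, $t^{\sigma^2}=\varepsilon t\varepsilon^{-1}$). $K_{\sigma,\varepsilon}=\{t-t^\sigma\varepsilon\}$, $\overline K=K/K_{\sigma,\varepsilon}$, $\bar t$ class of $t$, $\bar t\circ\lambda=\overline{\lambda^\sigma t\lambda}$; $\{t:t=-t^\sigma\varepsilon\}/K_{\sigma,\varepsilon}$ is a right $K$-vector space under $\circ$. $q:V\to\overline K/\overline R$ ($V$ right $K$-vector space) is a non-trivial generalized $(\sigma,\varepsilon)$-quadratic form: $\overline R$ is a $\circ$-stable subgroup, $q(x\lambda)=q(x)\circ\lambda$ with $(\bar t+\overline R)\circ\lambda=\bar t\circ\lambda+\overline R$, and a trace-valued $(\sigma,\varepsilon)$-sesquilinear $f$ ($f(x\lambda,y\mu)=\lambda^\sigma f(x,y)\mu$,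 $f(y,x)=f(x,y)^\sigma\varepsilon$, $f(x,x)\in\{t+t^\sigma\varepsilon\}$) satisfies $q(x+y)=q(x)+q(y)+(\overline{f(x,y)}+\overline R)$; $q$ not identically $\overline R$ (then $\overline R$ is a $K$-subspace of the vector space above). $q$-singular: $q(x)=\overline R$. For a basis $E=(e_i)_{i\in I}$ of $q$-singular vectors, $g_E(\sum e_i\lambda_i,\sum e_j\mu_j)=\sum_{i<j}\lambda_i^\sigma f(e_i,e_j)\mu_j$, and $\delta_{E,E'}(x)=\overline{g_E(x,x)}-\overline{g_{E'}(x,x)}\in\overline R$. $\overline R=\overline S\oplus\overline T$ as $K$-vector spaces, $\theta:\overline R\to\overline S$ the projection along $\overline T$. $V^{\overline S}=V\oplus\overline S$ and $q_E^{\overline S,\overline T}(x+\bar r)=\overline{g_E(x,x)}+\bar r+\overline T\in\overline K/\overline T$. *)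

theory Defs
  imports Main
begin

text \<open>Quotients such as K/K_{sigma,eps}, K/R etc. are handled through
representatives: a subgroup of the quotient is represented by its preimage in K,
and equality of classes is congruence modulo that preimage.\<close>

definition mod_eq :: "'k::ab_group_add set \<Rightarrow> 'k \<Rightarrow> 'k \<Rightarrow> bool" where
  "mod_eq A a b \<longleftrightarrow> a - b \<in> A"

definition admissible_pair :: "('k::division_ring \<Rightarrow> 'k) \<Rightarrow> 'k \<Rightarrow> bool" where
  "admissible_pair \<sigma> \<epsilon> \<longleftrightarrow>
     bij \<sigma> \<and> (\<forall>a b. \<sigma> (a + b) = \<sigma> a + \<sigma> b) \<and> (\<forall>a b. \<sigma> (a * b) = \<sigma> b * \<sigma> a)
     \<and> \<sigma> \<epsilon> * \<epsilon> = 1 \<and> (\<forall>t. \<sigma> (\<sigma> t) = \<epsilon> * t * inverse \<epsilon>)"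

definition Kse :: "('k::division_ring \<Rightarrow> 'k) \<Rightarrow> 'k \<Rightarrow> 'k set" where
  "Kse \<sigma> \<epsilon> = {t - \<sigma> t * \<epsilon> | t. True}"

definition Ktr :: "('k::division_ring \<Rightarrow> 'k) \<Rightarrow> 'k \<Rightarrow> 'k set" where
  "Ktr \<sigma> \<epsilon> = {t + \<sigma> t * \<epsilon> | t. True}"

text \<open>Preimage in K of a circ-stable subgroup of Kbar = K / K_{sigma,eps}
  (equivalently: of a K-subspace when contained in the vector space of the context).\<close>
definition circ_stable_subgroup :: "('k::division_ring \<Rightarrow> 'k) \<Rightarrow> 'k \<Rightarrow> 'k set \<Rightarrow> bool" where
  "circ_stable_subgroup \<sigma> \<epsilon> A \<longleftrightarrow>
     Kse \<sigma> \<epsilon> \<subseteq> A \<and> 0 \<in> A \<and> (\<forall>a\<in>A. \<forall>b\<in>A. a + b \<in> A) \<and> (\<forall>a\<in>A. - a \<in> A)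
     \<and> (\<forall>a\<in>A. \<forall>l. \<sigma> l * a * l \<in> A)"

definition right_vector_space :: "('v::ab_group_add \<Rightarrow> 'k::division_ring \<Rightarrow> 'v) \<Rightarrow> bool" where
  "right_vector_space smul \<longleftrightarrow>
     (\<forall>x. smul x 1 = x) \<and> (\<forall>x a b. smul (smul x a) b = smul x (a * b))
     \<and> (\<forall>x y a. smul (x + y) a = smul x a + smul y a)
     \<and> (\<forall>x a b. smul x (a + b) = smul x a + smul x b)"

definition is_basis :: "('v::ab_group_add \<Rightarrow> 'k::division_ring \<Rightarrow> 'v) \<Rightarrow> ('i \<Rightarrow> 'v) \<Rightarrow> bool" where
  "is_basis smul E \<longleftrightarrow>
     (\<forall>x. \<exists>!c. finite {i. c i \<noteq> 0} \<and> x = (\<Sum>i\<in>{i. c i \<noteq> 0}. smul (E i) (c i)))"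

definition coord :: "('v::ab_group_add \<Rightarrow> 'k::division_ring \<Rightarrow> 'v) \<Rightarrow> ('i \<Rightarrow> 'v) \<Rightarrow> 'v \<Rightarrow> 'i \<Rightarrow> 'k" where
  "coord smul E x = (THE c. finite {i. c i \<noteq> 0} \<and> x = (\<Sum>i\<in>{i. c i \<noteq> 0}. smul (E i) (c i)))"

definition trace_valued_sesq ::
  "('k::division_ring \<Rightarrow> 'k) \<Rightarrow> 'k \<Rightarrow> ('v::ab_group_add \<Rightarrow> 'k \<Rightarrow> 'v) \<Rightarrow> ('v \<Rightarrow> 'v \<Rightarrow> 'k) \<Rightarrow> bool" where
  "trace_valued_sesq \<sigma> \<epsilon> smul f \<longleftrightarrow>
     (\<forall>x y z. f (x + y) z = f x z + f y z) \<and> (\<forall>x y z. f x (y + z) = f x y + f x z)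
     \<and> (\<forall>x y l m. f (smul x l) (smul y m) = \<sigma> l * f x y * m)
     \<and> (\<forall>x y. f y x = \<sigma> (f x y) * \<epsilon>)
     \<and> (\<forall>x. f x x \<in> Ktr \<sigma> \<epsilon>)"

text \<open>Generalized (sigma,eps)-quadratic form q : V -> Kbar/Rbar, given by a
  representative-valued function q : V -> K; R is the preimage of Rbar in K.
  Non-triviality: q is not identically Rbar.\<close>
definition gen_quadratic_form ::
  "('k::division_ring \<Rightarrow> 'k) \<Rightarrow> 'k \<Rightarrow> ('v::ab_group_add \<Rightarrow> 'k \<Rightarrow> 'v) \<Rightarrow> 'k set
   \<Rightarrow> ('v \<Rightarrow> 'v \<Rightarrow> 'k) \<Rightarrow> ('v \<Rightarrow> 'k) \<Rightarrow> bool" where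
  "gen_quadratic_form \<sigma> \<epsilon> smul R f q \<longleftrightarrow>
     circ_stable_subgroup \<sigma> \<epsilon> R \<and> trace_valued_sesq \<sigma> \<epsilon> smul f
     \<and> (\<forall>x l. mod_eq R (q (smul x l)) (\<sigma> l * q x * l))
     \<and> (\<forall>x y. mod_eq R (q (x + y)) (q x + q y + f x y))
     \<and> (\<exists>x. q x \<notin> R)"

definition gE ::
  "('k::division_ring \<Rightarrow> 'k) \<Rightarrow> ('v::ab_group_add \<Rightarrow> 'k \<Rightarrow> 'v) \<Rightarrow> ('v \<Rightarrow> 'v \<Rightarrow> 'k)
   \<Rightarrow> ('i::linorder \<Rightarrow> 'v) \<Rightarrow> 'v \<Rightarrow> 'v \<Rightarrow> 'k" where
  "gE \<sigma> smul f E x y =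
     (let cx = coord smul E x; cy = coord smul E y in
      \<Sum>(i, j)\<in>{(i, j). cx i \<noteq> 0 \<and> cy j \<noteq> 0 \<and> i < j}. \<sigma> (cx i) * f (E i) (E j) * cy j)"

definition deltaEE ::
  "('k::division_ring \<Rightarrow> 'k) \<Rightarrow> ('v::ab_group_add \<Rightarrow> 'k \<Rightarrow> 'v) \<Rightarrow> ('v \<Rightarrow> 'v \<Rightarrow> 'k)
   \<Rightarrow> ('i::linorder \<Rightarrow> 'v) \<Rightarrow> ('i \<Rightarrow> 'v) \<Rightarrow> 'v \<Rightarrow> 'k" where
  "deltaEE \<sigma> smul f E E' x = gE \<sigma> smul f E x x - gE \<sigma> smul f E' x x"

text \<open>V^S = V (+) Sbar: pairs (x, s) with s a representative in S; equality of
  elements of V^S, addition and right scalar multiplication.\<close>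
definition VS :: "'k::division_ring set \<Rightarrow> ('v \<times> 'k) set" where
  "VS S = {(x, s). s \<in> S}"

definition VS_eq :: "('k::division_ring \<Rightarrow> 'k) \<Rightarrow> 'k \<Rightarrow> ('v \<times> 'k) \<Rightarrow> ('v \<times> 'k) \<Rightarrow> bool" where
  "VS_eq \<sigma> \<epsilon> v w \<longleftrightarrow> fst v = fst w \<and> mod_eq (Kse \<sigma> \<epsilon>) (snd v) (snd w)"

definition VS_add :: "('v::ab_group_add \<times> 'k::division_ring) \<Rightarrow> ('v \<times> 'k) \<Rightarrow> ('v \<times> 'k)" where
  "VS_add v w = (fst v + fst w, snd v + snd w)"

definition VS_smul ::
  "('k::division_ring \<Rightarrow> 'k) \<Rightarrow> ('v \<Rightarrow> 'k \<Rightarrow> 'v) \<Rightarrow> ('v \<times> 'k) \<Rightarrow> 'k \<Rightarrow> ('v \<times> 'k)" where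
  "VS_smul \<sigma> smul v l = (smul (fst v) l, \<sigma> l * snd v * l)"

definition DeltaEE ::
  "('k::division_ring \<Rightarrow> 'k) \<Rightarrow> ('v::ab_group_add \<Rightarrow> 'k \<Rightarrow> 'v) \<Rightarrow> ('v \<Rightarrow> 'v \<Rightarrow> 'k)
   \<Rightarrow> ('k \<Rightarrow> 'k) \<Rightarrow> ('i::linorder \<Rightarrow> 'v) \<Rightarrow> ('i \<Rightarrow> 'v) \<Rightarrow> ('v \<times> 'k) \<Rightarrow> ('v \<times> 'k)" where
  "DeltaEE \<sigma> smul f \<theta> E E' v = (fst v, \<theta> (deltaEE \<sigma> smul f E E' (fst v)) + snd v)"

text \<open>q_E^{S,T}(x + r) = g_E(x,x) + r + Tbar (representative; compare with mod_eq T)\<close>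
definition qEST ::
  "('k::division_ring \<Rightarrow> 'k) \<Rightarrow> ('v::ab_group_add \<Rightarrow> 'k \<Rightarrow> 'v) \<Rightarrow> ('v \<Rightarrow> 'v \<Rightarrow> 'k)
   \<Rightarrow> ('i::linorder \<Rightarrow> 'v) \<Rightarrow> ('v \<times> 'k) \<Rightarrow> 'k" where
  "qEST \<sigma> smul f E v = gE \<sigma> smul f E (fst v) (fst v) + snd v"

end

theory Submission
  imports Defs
begin

locale ctx =
  fixes \<sigma> :: "'k::division_ring \<Rightarrow> 'k" and \<epsilon> :: 'k
    and smul :: "'v::ab_group_add \<Rightarrow> 'k \<Rightarrow> 'v"
    and f :: "'v \<Rightarrow> 'v \<Rightarrow> 'k" and q :: "'v \<Rightarrow> 'k" and R :: "'k set"
  assumes adm: "admissible_pair \<sigma> \<epsilon>"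
    and vs: "right_vector_space smul"
    and qf: "gen_quadratic_form \<sigma> \<epsilon> smul R f q"
begin

lemma sadd: "\<sigma> (a + b) = \<sigma> a + \<sigma> b" using adm by (simp add: admissible_pair_def)
lemma smult: "\<sigma> (a * b) = \<sigma> b * \<sigma> a" using adm by (simp add: admissible_pair_def)
lemma sbij: "bij \<sigma>" using adm by (simp add: admissible_pair_def)
lemma seps: "\<sigma> \<epsilon> * \<epsilon> = 1" using adm by (simp add: admissible_pair_def)
lemma ss: "\<sigma> (\<sigma> t) = \<epsilon> * t * inverse \<epsilon>" using adm by (simp add: admissible_pair_def)
lemma eps_nz: "\<epsilon> \<noteq> 0" using seps by auto
lemma s0[simp]: "\<sigma> 0 = 0" using sadd[of 0 0] by simp
lemma s1[simp]: "\<sigma> 1 = 1"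
proof -
  obtain a where "\<sigma> a = 1" using sbij by (metis bij_pointE)
  then show ?thesis using smult[of a 1] by simp
qed
lemma sneg: "\<sigma> (- a) = - \<sigma> a" using sadd[of "-a" a] by (simp add: eq_neg_iff_add_eq_0)
lemma sdiff: "\<sigma> (a - b) = \<sigma> a - \<sigma> b"
proof -
  have "\<sigma> (a + - b) = \<sigma> a + \<sigma> (- b)" by (rule sadd)
  thus ?thesis by (simp add: sneg)
qed
lemma ssum: "\<sigma> (sum g A) = (\<Sum>i\<in>A. \<sigma> (g i))"
  by (induction A rule: infinite_finite_induct) (auto simp: sadd)

lemma sm1[simp]: "smul x 1 = x" using vs by (simp add: right_vector_space_def)
lemma smsm: "smul (smul x a) b = smul x (a * b)" using vs by (simp add: right_vector_space_def)
lemma smaddv: "smul (x + y) a = smul x a + smul y a" using vs by (simp add: right_vector_space_def)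
lemma smadds: "smul x (a + b) = smul x a + smul x b" using vs by (simp add: right_vector_space_def)
lemma sm0s[simp]: "smul x 0 = 0" using smadds[of x 0 0] by simp
lemma sm0v[simp]: "smul 0 a = 0" using smaddv[of 0 0 a] by simp
lemma smsum: "smul (sum g A) l = (\<Sum>i\<in>A. smul (g i) l)"
  by (induction A rule: infinite_finite_induct) (auto simp: smaddv)

lemma tv: "trace_valued_sesq \<sigma> \<epsilon> smul f" using qf by (simp add: gen_quadratic_form_def)
lemma faddl: "f (x + y) z = f x z + f y z" using tv unfolding trace_valued_sesq_def by blast
lemma faddr: "f x (y + z) = f x y + f x z" using tv unfolding trace_valued_sesq_def by blast
lemma fsm: "f (smul x l) (smul y m) = \<sigma> l * f x y * m" using tv unfolding trace_valued_sesq_def by blast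
lemma fsym: "f y x = \<sigma> (f x y) * \<epsilon>" using tv unfolding trace_valued_sesq_def by blast
lemma f0l[simp]: "f 0 y = 0" using faddl[of 0 0 y] by simp
lemma f0r[simp]: "f x 0 = 0" using faddr[of x 0 0] by simp
lemma fsml: "f (smul x l) y = \<sigma> l * f x y" using fsm[of x l y 1] by simp
lemma fsmr: "f x (smul y m) = f x y * m" using fsm[of x 1 y m] by simp
lemma fsuml: "f (sum g A) z = (\<Sum>i\<in>A. f (g i) z)"
  by (induction A rule: infinite_finite_induct) (auto simp: faddl)
lemma fsumr: "f z (sum g A) = (\<Sum>i\<in>A. f z (g i))"
  by (induction A rule: infinite_finite_induct) (auto simp: faddr)

lemma Rcs: "circ_stable_subgroup \<sigma> \<epsilon> R" using qf by (simp add: gen_quadratic_form_def)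
lemma R0: "0 \<in> R" using Rcs by (simp add: circ_stable_subgroup_def)
lemma Radd: "a \<in> R \<Longrightarrow> b \<in> R \<Longrightarrow> a + b \<in> R" using Rcs by (simp add: circ_stable_subgroup_def)
lemma Rneg: "a \<in> R \<Longrightarrow> - a \<in> R" using Rcs by (simp add: circ_stable_subgroup_def)
lemma Rdiff: "a \<in> R \<Longrightarrow> b \<in> R \<Longrightarrow> a - b \<in> R" using Radd Rneg by (metis diff_conv_add_uminus)
lemma Rcirc: "a \<in> R \<Longrightarrow> \<sigma> l * a * l \<in> R" using Rcs by (simp add: circ_stable_subgroup_def)
lemma qsm: "q (smul x l) - \<sigma> l * q x * l \<in> R" using qf by (simp add: gen_quadratic_form_def mod_eq_def)
lemma qadd: "q (x + y) - (q x + q y + f x y) \<in> R" using qf by (simp add: gen_quadratic_form_def mod_eq_def)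
lemma qnt: "\<exists>x. q x \<notin> R" using qf by (simp add: gen_quadratic_form_def)

lemma fsing: assumes "q e \<in> R" shows "f e e = 0"
proof (rule ccontr)
  assume nz: "f e e \<noteq> 0"
  have all: "f e e * l \<in> R" for l
  proof -
    have 1: "q (e + smul e l) - (q e + q (smul e l) + f e (smul e l)) \<in> R" by (rule qadd)
    have "e + smul e l = smul e (1 + l)" by (simp add: smadds)
    hence 2: "q (e + smul e l) - \<sigma> (1 + l) * q e * (1 + l) \<in> R" using qsm by simp
    have 3: "\<sigma> (1 + l) * q e * (1 + l) \<in> R" using Rcirc assms by blast
    have 4: "q (smul e l) \<in> R" using qsm[of e l] Rcirc[OF assms, of l] Radd by fastforce
    have qe: "q (e + smul e l) \<in> R" using 2 3 Radd by fastforce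
    have "q e + q (smul e l) + f e (smul e l) = q (e + smul e l) - (q (e + smul e l) - (q e + q (smul e l) + f e (smul e l)))" by simp
    also have "\<dots> \<in> R" by (rule Rdiff[OF qe 1])
    finally have 5: "q e + q (smul e l) + f e (smul e l) \<in> R" .
    have "f e (smul e l) = (q e + q (smul e l) + f e (smul e l)) - (q e + q (smul e l))" by simp
    also have "\<dots> \<in> R" by (rule Rdiff[OF 5 Radd[OF assms 4]])
    finally have "f e (smul e l) \<in> R" .
    thus ?thesis by (simp add: fsmr)
  qed
  have "x \<in> R" for x using all[of "inverse (f e e) * x"] nz by (simp add: mult.assoc[symmetric])
  thus False using qnt by blast
qed

lemma Kse_in: "a - \<sigma> a * \<epsilon> \<in> Kse \<sigma> \<epsilon>" by (auto simp: Kse_def)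
lemma Kse0: "0 \<in> Kse \<sigma> \<epsilon>" using Kse_in[of 0] by simp
lemma Kse_add: "a \<in> Kse \<sigma> \<epsilon> \<Longrightarrow> b \<in> Kse \<sigma> \<epsilon> \<Longrightarrow> a + b \<in> Kse \<sigma> \<epsilon>"
  unfolding Kse_def apply clarify
  subgoal for t u using Kse_in[of "t+u"] by (simp add: Kse_def sadd algebra_simps)
  done
lemma Kse_neg: "a \<in> Kse \<sigma> \<epsilon> \<Longrightarrow> - a \<in> Kse \<sigma> \<epsilon>"
  unfolding Kse_def apply clarify
  subgoal for t using Kse_in[of "-t"] by (simp add: Kse_def sneg algebra_simps)
  done
lemma Kse_diff: "a \<in> Kse \<sigma> \<epsilon> \<Longrightarrow> b \<in> Kse \<sigma> \<epsilon> \<Longrightarrow> a - b \<in> Kse \<sigma> \<epsilon>"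
  using Kse_add Kse_neg by (metis diff_conv_add_uminus)

definition supp :: "('i \<Rightarrow> 'k) \<Rightarrow> 'i set" where "supp c = {i. c i \<noteq> 0}"
definition rep :: "('i \<Rightarrow> 'v) \<Rightarrow> ('i \<Rightarrow> 'k) \<Rightarrow> 'v" where
  "rep E c = (\<Sum>i\<in>supp c. smul (E i) (c i))"

lemma rep_super: "finite B \<Longrightarrow> supp c \<subseteq> B \<Longrightarrow> (\<Sum>i\<in>B. smul (E i) (c i)) = rep E c"
  unfolding rep_def by (rule sum.mono_neutral_right) (auto simp: supp_def)

lemma basis_ex1: assumes "is_basis smul E"
  shows "\<exists>!c. finite {i. c i \<noteq> 0} \<and> x = (\<Sum>i\<in>{i. c i \<noteq> 0}. smul (E i) (c i))"
  using assms unfolding is_basis_def by (rule spec)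

lemma coord_spec: assumes "is_basis smul E"
  shows "finite (supp (coord smul E x)) \<and> x = rep E (coord smul E x)"
  using theI'[OF basis_ex1[OF assms, of x]] unfolding coord_def[symmetric] supp_def rep_def .

lemma coord_uniq: assumes "is_basis smul E" "finite (supp c)" "x = rep E c"
  shows "coord smul E x = c"
  unfolding coord_def
  by (rule the1_equality[OF basis_ex1[OF assms(1)]]) (use assms(2,3) in \<open>simp add: supp_def rep_def\<close>)

lemma coord_add: assumes "is_basis smul E"
  shows "coord smul E (x + y) = (\<lambda>i. coord smul E x i + coord smul E y i)"
proof -
  let ?c = "coord smul E x" and ?d = "coord smul E y"
  let ?B = "supp ?c \<union> supp ?d"
  have fB: "finite ?B" using coord_spec[OF assms] by auto
  have sub: "supp (\<lambda>i. ?c i + ?d i) \<subseteq> ?B" by (auto simp: supp_def)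
  have "rep E (\<lambda>i. ?c i + ?d i) = (\<Sum>i\<in>?B. smul (E i) (?c i + ?d i))"
    using rep_super[OF fB sub] by simp
  also have "\<dots> = (\<Sum>i\<in>?B. smul (E i) (?c i)) + (\<Sum>i\<in>?B. smul (E i) (?d i))"
    by (simp add: smadds sum.distrib)
  also have "\<dots> = x + y" using rep_super[OF fB, of ?c E] rep_super[OF fB, of ?d E] coord_spec[OF assms]
    by auto
  finally show ?thesis using coord_uniq[OF assms, of "\<lambda>i. ?c i + ?d i"] fB sub
    by (metis finite_subset)
qed

lemma coord_smul: assumes "is_basis smul E"
  shows "coord smul E (smul x l) = (\<lambda>i. coord smul E x i * l)"
proof -
  let ?c = "coord smul E x"
  let ?B = "supp ?c"
  have fB: "finite ?B" using coord_spec[OF assms] by auto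
  have sub: "supp (\<lambda>i. ?c i * l) \<subseteq> ?B" by (auto simp: supp_def)
  have "rep E (\<lambda>i. ?c i * l) = (\<Sum>i\<in>?B. smul (E i) (?c i * l))"
    using rep_super[OF fB sub] by simp
  also have "\<dots> = smul (\<Sum>i\<in>?B. smul (E i) (?c i)) l"
    by (simp add: smsum smsm)
  also have "\<dots> = smul x l" using coord_spec[OF assms, of x] by (simp add: rep_def)
  finally show ?thesis using coord_uniq[OF assms, of "\<lambda>i. ?c i * l"] fB sub
    by (metis finite_subset)
qed

lemma coord_0: assumes "is_basis smul E" shows "coord smul E 0 = (\<lambda>i. 0)"
  using coord_uniq[OF assms, of "\<lambda>i. 0" 0] by (simp add: supp_def rep_def)

definition G :: "('i::linorder \<Rightarrow> 'v) \<Rightarrow> ('i \<Rightarrow> 'k) \<Rightarrow> ('i \<Rightarrow> 'k) \<Rightarrow> 'i set \<Rightarrow> 'k" where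
  "G E c d B = (\<Sum>(i, j)\<in>{(i, j). i \<in> B \<and> j \<in> B \<and> i < j}. \<sigma> (c i) * f (E i) (E j) * d j)"

lemma fin_pairs: "finite B \<Longrightarrow> finite {(i, j). i \<in> B \<and> j \<in> B \<and> P i j}"
  by (rule finite_subset[of _ "B \<times> B"]) auto

lemma gE_G: assumes "is_basis smul E" "finite B" "supp (coord smul E x) \<subseteq> B" "supp (coord smul E y) \<subseteq> B"
  shows "gE \<sigma> smul f E x y = G E (coord smul E x) (coord smul E y) B"
  unfolding gE_def G_def Let_def
  apply (rule sum.mono_neutral_left)
  using assms by (auto simp: supp_def intro!: fin_pairs)

lemma G_alt: "finite B \<Longrightarrow> G E c d B =
   (\<Sum>i\<in>B. \<Sum>j\<in>B. if i < j then \<sigma> (c i) * f (E i) (E j) * d j else 0)"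
proof -
  assume fB: "finite B"
  have "{(i, j). i \<in> B \<and> j \<in> B \<and> i < j} = {x \<in> B \<times> B. fst x < snd x}" by auto
  hence "G E c d B = (\<Sum>x\<in>{x \<in> B \<times> B. fst x < snd x}. \<sigma> (c (fst x)) * f (E (fst x)) (E (snd x)) * d (snd x))"
    unfolding G_def by (simp add: case_prod_beta)
  also have "\<dots> = (\<Sum>x\<in>B \<times> B. if fst x < snd x then \<sigma> (c (fst x)) * f (E (fst x)) (E (snd x)) * d (snd x) else 0)"
    using fB by (simp add: sum.inter_filter)
  also have "\<dots> = (\<Sum>i\<in>B. \<Sum>j\<in>B. if i < j then \<sigma> (c i) * f (E i) (E j) * d j else 0)"
    by (simp add: sum.cartesian_product case_prod_beta)
  finally show ?thesis .
qed

lemma G_smul: "finite B \<Longrightarrow> G E (\<lambda>i. c i * l) (\<lambda>i. c i * l) B = \<sigma> l * G E c c B * l"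
proof -
  assume fB: "finite B"
  have e: "(if i < j then \<sigma> (c i * l) * f (E i) (E j) * (c j * l) else 0)
     = \<sigma> l * (if i < j then \<sigma> (c i) * f (E i) (E j) * c j else 0) * l" for i j
    by (simp add: smult mult.assoc)
  have "G E (\<lambda>i. c i * l) (\<lambda>i. c i * l) B = (\<Sum>i\<in>B. \<Sum>j\<in>B. \<sigma> l * (if i < j then \<sigma> (c i) * f (E i) (E j) * c j else 0) * l)"
    using fB by (simp only: G_alt e)
  also have "\<dots> = \<sigma> l * G E c c B * l"
    using fB by (simp only: G_alt sum_distrib_left sum_distrib_right)
  finally show ?thesis .
qed

lemma G_add: "finite B \<Longrightarrow> G E (\<lambda>i. c i + d i) (\<lambda>i. c i + d i) B
   = G E c c B + G E d d B + G E c d B + G E d c B"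
  by (simp add: G_alt sadd algebra_simps sum.distrib[symmetric] if_distrib cong: if_cong)

lemma elt_swap: "\<sigma> (\<sigma> a * f x y * b) * \<epsilon> = \<sigma> b * f y x * a"
proof -
  have "\<sigma> (\<sigma> a * f x y * b) * \<epsilon> = \<sigma> b * \<sigma> (f x y) * (\<epsilon> * a * inverse \<epsilon>) * \<epsilon>"
    by (simp add: smult ss mult.assoc)
  also have "\<dots> = \<sigma> b * (\<sigma> (f x y) * \<epsilon>) * a * (inverse \<epsilon> * \<epsilon>)" by (simp add: mult.assoc)
  also have "\<dots> = \<sigma> b * f y x * a" using eps_nz by (simp add: fsym[of y x])
  finally show ?thesis .
qed

lemma G_sym: assumes fB: "finite B" and diag: "\<forall>i\<in>B. f (E i) (E i) = 0"
  shows "G E c d B + \<sigma> (G E d c B) * \<epsilon> = (\<Sum>i\<in>B. \<Sum>j\<in>B. \<sigma> (c i) * f (E i) (E j) * d j)"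
proof -
  have "\<sigma> (G E d c B) * \<epsilon> = (\<Sum>i\<in>B. \<Sum>j\<in>B. if i < j then \<sigma> (c j) * f (E j) (E i) * d i else 0)"
  proof -
    have e: "\<sigma> (if i < j then \<sigma> (d i) * f (E i) (E j) * c j else 0) * \<epsilon>
        = (if i < j then \<sigma> (c j) * f (E j) (E i) * d i else 0)" for i j
      by (simp add: elt_swap)
    show ?thesis using fB by (simp only: G_alt ssum sum_distrib_right e)
  qed
  also have "\<dots> = (\<Sum>j\<in>B. \<Sum>i\<in>B. if i < j then \<sigma> (c j) * f (E j) (E i) * d i else 0)"
    by (rule sum.swap)
  finally have 1: "\<sigma> (G E d c B) * \<epsilon> = (\<Sum>i\<in>B. \<Sum>j\<in>B. if j < i then \<sigma> (c i) * f (E i) (E j) * d j else 0)" .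
  have "G E c d B + \<sigma> (G E d c B) * \<epsilon> = (\<Sum>i\<in>B. \<Sum>j\<in>B. (if i < j then \<sigma> (c i) * f (E i) (E j) * d j else 0)
        + (if j < i then \<sigma> (c i) * f (E i) (E j) * d j else 0))"
    unfolding 1 by (simp only: G_alt[OF fB] sum.distrib)
  also have "\<dots> = (\<Sum>i\<in>B. \<Sum>j\<in>B. \<sigma> (c i) * f (E i) (E j) * d j)"
  proof (rule sum.cong[OF refl], rule sum.cong[OF refl])
    fix i j assume "i \<in> B" "j \<in> B"
    thus "(if i < j then \<sigma> (c i) * f (E i) (E j) * d j else 0) + (if j < i then \<sigma> (c i) * f (E i) (E j) * d j else 0)
          = \<sigma> (c i) * f (E i) (E j) * d j"
      using diag by (cases i j rule: linorder_cases) auto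
  qed
  finally show ?thesis .
qed

lemma f_sums: "f (\<Sum>i\<in>B. smul (E i) (c i)) (\<Sum>j\<in>B. smul (E j) (d j))
   = (\<Sum>i\<in>B. \<Sum>j\<in>B. \<sigma> (c i) * f (E i) (E j) * d j)"
  apply (simp add: fsuml fsumr fsm)
  by (rule sum.swap)

lemma G_insert: assumes fB: "finite B" and lt: "\<forall>a\<in>B. a < m"
  shows "G E c d (insert m B) = G E c d B + (\<Sum>i\<in>B. \<sigma> (c i) * f (E i) (E m) * d m)"
proof -
  have mB: "m \<notin> B" using lt by auto
  define k where "k i j = (if i < j then \<sigma> (c i) * f (E i) (E j) * d j else 0)" for i j
  have G1: "G E c d C = (\<Sum>i\<in>C. \<Sum>j\<in>C. k i j)" if "finite C" for C
    unfolding k_def using that by (rule G_alt)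
  have hm: "(\<Sum>j\<in>insert m B. k m j) = 0"
    using lt by (intro sum.neutral) (auto simp: k_def)
  have hi: "(\<Sum>j\<in>insert m B. k i j) = \<sigma> (c i) * f (E i) (E m) * d m + (\<Sum>j\<in>B. k i j)" if "i \<in> B" for i
    using fB mB lt that by (simp add: k_def)
  have "G E c d (insert m B) = (\<Sum>j\<in>insert m B. k m j) + (\<Sum>i\<in>B. \<Sum>j\<in>insert m B. k i j)"
    using fB mB by (simp add: G1)
  also have "\<dots> = (\<Sum>i\<in>B. \<sigma> (c i) * f (E i) (E m) * d m + (\<Sum>j\<in>B. k i j))"
    using hm hi by simp
  also have "\<dots> = G E c d B + (\<Sum>i\<in>B. \<sigma> (c i) * f (E i) (E m) * d m)"
    using fB by (simp add: G1 sum.distrib)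
  finally show ?thesis .
qed

lemma q_sum: assumes "finite B" "\<forall>i. q (E i) \<in> R"
  shows "q (\<Sum>i\<in>B. smul (E i) (c i)) - G E c c B \<in> R"
  using assms(1)
proof (induction B rule: finite_linorder_max_induct)
  case empty
  have "q 0 - \<sigma> 0 * q 0 * 0 \<in> R" using qsm[of 0 0] by simp
  thus ?case by (simp add: G_def)
next
  case (insert m B)
  have mB: "m \<notin> B" using insert by auto
  let ?s = "\<Sum>i\<in>B. smul (E i) (c i)" and ?t = "smul (E m) (c m)"
  have 1: "q (?s + ?t) - (q ?s + q ?t + f ?s ?t) \<in> R" by (rule qadd)
  have 2: "q ?t \<in> R" using qsm[of "E m" "c m"] Rcirc[of "q (E m)" "c m"] assms(2) Radd by fastforce
  have 3: "f ?s ?t = (\<Sum>i\<in>B. \<sigma> (c i) * f (E i) (E m) * c m)" by (simp add: fsuml fsm)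
  have "q (?s + ?t) - G E c c (insert m B) = (q (?s + ?t) - (q ?s + q ?t + f ?s ?t)) + (q ?s - G E c c B) + q ?t"
    using insert 3 by (simp add: G_insert algebra_simps)
  also have "\<dots> \<in> R" using 1 2 insert.IH Radd by blast
  finally show ?case using insert mB by (simp add: add.commute)
qed

lemma gE_q: assumes "is_basis smul E" "\<forall>i. q (E i) \<in> R"
  shows "q x - gE \<sigma> smul f E x x \<in> R"
proof -
  let ?c = "coord smul E x"
  have fB: "finite (supp ?c)" and x: "x = rep E ?c" using coord_spec[OF assms(1)] by auto
  have "gE \<sigma> smul f E x x = G E ?c ?c (supp ?c)" using gE_G[OF assms(1) fB] by simp
  thus ?thesis using q_sum[OF fB assms(2), of ?c] x by (simp add: rep_def)
qed

lemma gE_add: assumes "is_basis smul E" "\<forall>i. q (E i) \<in> R"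
  shows "gE \<sigma> smul f E (x + y) (x + y) - (gE \<sigma> smul f E x x + gE \<sigma> smul f E y y + f x y) \<in> Kse \<sigma> \<epsilon>"
proof -
  let ?c = "coord smul E x" and ?d = "coord smul E y"
  let ?B = "supp ?c \<union> supp ?d"
  have fB: "finite ?B" using coord_spec[OF assms(1)] by auto
  have ca: "coord smul E (x + y) = (\<lambda>i. ?c i + ?d i)" by (rule coord_add[OF assms(1)])
  have sub: "supp (\<lambda>i. ?c i + ?d i) \<subseteq> ?B" by (auto simp: supp_def)
  have g1: "gE \<sigma> smul f E (x + y) (x + y) = G E (\<lambda>i. ?c i + ?d i) (\<lambda>i. ?c i + ?d i) ?B"
    using gE_G[OF assms(1) fB] ca sub by simp
  have g2: "gE \<sigma> smul f E x x = G E ?c ?c ?B" using gE_G[OF assms(1) fB] by auto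
  have g3: "gE \<sigma> smul f E y y = G E ?d ?d ?B" using gE_G[OF assms(1) fB] by auto
  have xr: "x = (\<Sum>i\<in>?B. smul (E i) (?c i))" using rep_super[OF fB, of ?c E] coord_spec[OF assms(1), of x] by auto
  have yr: "y = (\<Sum>i\<in>?B. smul (E i) (?d i))" using rep_super[OF fB, of ?d E] coord_spec[OF assms(1), of y] by auto
  have diag: "\<forall>i\<in>?B. f (E i) (E i) = 0" using fsing assms(2) by blast
  have fxy: "f x y = G E ?c ?d ?B + \<sigma> (G E ?d ?c ?B) * \<epsilon>"
    using G_sym[OF fB diag, of ?c ?d] f_sums[of E ?c ?B ?d] xr yr by simp
  have "gE \<sigma> smul f E (x + y) (x + y) - (gE \<sigma> smul f E x x + gE \<sigma> smul f E y y + f x y)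
      = G E ?d ?c ?B - \<sigma> (G E ?d ?c ?B) * \<epsilon>"
    using g1 g2 g3 fxy G_add[OF fB, of E ?c ?d] by (simp add: algebra_simps)
  thus ?thesis using Kse_in by simp
qed

lemma gE_smul: assumes "is_basis smul E"
  shows "gE \<sigma> smul f E (smul x l) (smul x l) = \<sigma> l * gE \<sigma> smul f E x x * l"
proof -
  let ?c = "coord smul E x"
  let ?B = "supp ?c"
  have fB: "finite ?B" using coord_spec[OF assms(1)] by auto
  have cs: "coord smul E (smul x l) = (\<lambda>i. ?c i * l)" by (rule coord_smul[OF assms])
  have sub: "supp (\<lambda>i. ?c i * l) \<subseteq> ?B" by (auto simp: supp_def)
  show ?thesis using gE_G[OF assms fB] cs sub G_smul[OF fB] by simp
qed

lemma gE_0: assumes "is_basis smul E" shows "gE \<sigma> smul f E 0 0 = 0"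
  using coord_0[OF assms] by (simp add: gE_def)

end

lemma cs_diff: "circ_stable_subgroup \<sigma> \<epsilon> A \<Longrightarrow> a \<in> A \<Longrightarrow> b \<in> A \<Longrightarrow> a - b \<in> A"
  unfolding circ_stable_subgroup_def by (metis diff_conv_add_uminus)
lemma cs_add: "circ_stable_subgroup \<sigma> \<epsilon> A \<Longrightarrow> a \<in> A \<Longrightarrow> b \<in> A \<Longrightarrow> a + b \<in> A"
  unfolding circ_stable_subgroup_def by metis
lemma cs_circ: "circ_stable_subgroup \<sigma> \<epsilon> A \<Longrightarrow> a \<in> A \<Longrightarrow> \<sigma> l * a * l \<in> A"
  unfolding circ_stable_subgroup_def by metis
lemma cs_Kse: "circ_stable_subgroup \<sigma> \<epsilon> A \<Longrightarrow> Kse \<sigma> \<epsilon> \<subseteq> A"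
  unfolding circ_stable_subgroup_def by metis
lemma cs_0: "circ_stable_subgroup \<sigma> \<epsilon> A \<Longrightarrow> 0 \<in> A"
  unfolding circ_stable_subgroup_def by metis

theorem mainTheorem17:
  fixes \<sigma> :: "'k::division_ring \<Rightarrow> 'k" and \<epsilon> :: 'k
    and smul :: "'v::ab_group_add \<Rightarrow> 'k \<Rightarrow> 'v"
    and f :: "'v \<Rightarrow> 'v \<Rightarrow> 'k" and q :: "'v \<Rightarrow> 'k"
    and R S T :: "'k set" and \<theta> :: "'k \<Rightarrow> 'k"
    and E E' :: "'i::linorder \<Rightarrow> 'v"
  assumes adm: "admissible_pair \<sigma> \<epsilon>"
    and vs: "right_vector_space smul"
    and qf: "gen_quadratic_form \<sigma> \<epsilon> smul R f q"
    and S: "circ_stable_subgroup \<sigma> \<epsilon> S"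
    and T: "circ_stable_subgroup \<sigma> \<epsilon> T"
    and RST: "R = {s + t | s t. s \<in> S \<and> t \<in> T}"
    and ST: "S \<inter> T = Kse \<sigma> \<epsilon>"
    and \<theta>: "\<forall>r\<in>R. \<theta> r \<in> S \<and> r - \<theta> r \<in> T"
    and E: "is_basis smul E" and Esing: "\<forall>i. q (E i) \<in> R"
    and E': "is_basis smul E'" and E'sing: "\<forall>i. q (E' i) \<in> R"
  shows "(\<forall>v\<in>VS S. DeltaEE \<sigma> smul f \<theta> E E' v \<in> VS S)
    \<and> (\<forall>v\<in>VS S. \<forall>w\<in>VS S. VS_eq \<sigma> \<epsilon> v w \<longrightarrow>
          VS_eq \<sigma> \<epsilon> (DeltaEE \<sigma> smul f \<theta> E E' v) (DeltaEE \<sigma> smul f \<theta> E E' w))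
    \<and> (\<forall>v\<in>VS S. \<forall>w\<in>VS S. VS_eq \<sigma> \<epsilon> (DeltaEE \<sigma> smul f \<theta> E E' (VS_add v w))
          (VS_add (DeltaEE \<sigma> smul f \<theta> E E' v) (DeltaEE \<sigma> smul f \<theta> E E' w)))
    \<and> (\<forall>v\<in>VS S. \<forall>l. VS_eq \<sigma> \<epsilon> (DeltaEE \<sigma> smul f \<theta> E E' (VS_smul \<sigma> smul v l))
          (VS_smul \<sigma> smul (DeltaEE \<sigma> smul f \<theta> E E' v) l))
    \<and> (\<forall>v\<in>VS S. \<forall>w\<in>VS S. VS_eq \<sigma> \<epsilon> (DeltaEE \<sigma> smul f \<theta> E E' v) (DeltaEE \<sigma> smul f \<theta> E E' w)
          \<longrightarrow> VS_eq \<sigma> \<epsilon> v w)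
    \<and> (\<forall>w\<in>VS S. \<exists>v\<in>VS S. VS_eq \<sigma> \<epsilon> (DeltaEE \<sigma> smul f \<theta> E E' v) w)
    \<and> (\<forall>s\<in>S. VS_eq \<sigma> \<epsilon> (DeltaEE \<sigma> smul f \<theta> E E' (0, s)) (0, s))
    \<and> (\<forall>v\<in>VS S. mod_eq T (qEST \<sigma> smul f E v) (qEST \<sigma> smul f E' (DeltaEE \<sigma> smul f \<theta> E E' v)))"
proof -
  interpret ctx \<sigma> \<epsilon> smul f q R using adm vs qf by unfold_locales
  let ?d = "deltaEE \<sigma> smul f E E'"
  let ?D = "DeltaEE \<sigma> smul f \<theta> E E'"
  have KT: "Kse \<sigma> \<epsilon> \<subseteq> T" using cs_Kse[OF T] .
  have KS: "Kse \<sigma> \<epsilon> \<subseteq> S" using cs_Kse[OF S] .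
  have dR: "?d x \<in> R" for x
  proof -
    have "?d x = (q x - gE \<sigma> smul f E' x x) - (q x - gE \<sigma> smul f E x x)" by (simp add: deltaEE_def)
    also have "\<dots> \<in> R" by (rule Rdiff[OF gE_q[OF E' E'sing] gE_q[OF E Esing]])
    finally show ?thesis .
  qed
  have dadd: "?d (x + y) - (?d x + ?d y) \<in> Kse \<sigma> \<epsilon>" for x y
  proof -
    have "?d (x + y) - (?d x + ?d y) =
      (gE \<sigma> smul f E (x + y) (x + y) - (gE \<sigma> smul f E x x + gE \<sigma> smul f E y y + f x y))
      - (gE \<sigma> smul f E' (x + y) (x + y) - (gE \<sigma> smul f E' x x + gE \<sigma> smul f E' y y + f x y))"
      by (simp add: deltaEE_def algebra_simps)
    also have "\<dots> \<in> Kse \<sigma> \<epsilon>" by (rule Kse_diff[OF gE_add[OF E Esing] gE_add[OF E' E'sing]])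
    finally show ?thesis .
  qed
  have dsm: "?d (smul x l) = \<sigma> l * ?d x * l" for x l
    by (simp add: deltaEE_def gE_smul[OF E] gE_smul[OF E'] algebra_simps)
  have d0: "?d 0 = 0" by (simp add: deltaEE_def gE_0[OF E] gE_0[OF E'])
  have thS: "r \<in> R \<Longrightarrow> \<theta> r \<in> S" for r using \<theta> by blast
  have thT: "r \<in> R \<Longrightarrow> r - \<theta> r \<in> T" for r using \<theta> by blast
  have ST': "a \<in> S \<Longrightarrow> a \<in> T \<Longrightarrow> a \<in> Kse \<sigma> \<epsilon>" for a
  proof -
    assume "a \<in> S" "a \<in> T"
    hence "a \<in> S \<inter> T" by (rule IntI)
    thus ?thesis unfolding ST .
  qed
  have thcong: "a \<in> R \<Longrightarrow> b \<in> R \<Longrightarrow> a - b \<in> Kse \<sigma> \<epsilon> \<Longrightarrow> \<theta> a - \<theta> b \<in> Kse \<sigma> \<epsilon>" for a b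
  proof -
    assume a: "a \<in> R" and b: "b \<in> R" and ab: "a - b \<in> Kse \<sigma> \<epsilon>"
    have 1: "\<theta> a - \<theta> b \<in> S" by (rule cs_diff[OF S thS[OF a] thS[OF b]])
    have abT: "a - b \<in> T" using KT ab by (rule subsetD)
    have "\<theta> a - \<theta> b = (a - b) - ((a - \<theta> a) - (b - \<theta> b))" by (simp add: algebra_simps)
    also have "\<dots> \<in> T" by (rule cs_diff[OF T abT cs_diff[OF T thT[OF a] thT[OF b]]])
    finally show ?thesis using 1 ST' by blast
  qed
  have thadd: "a \<in> R \<Longrightarrow> b \<in> R \<Longrightarrow> \<theta> (a + b) - (\<theta> a + \<theta> b) \<in> Kse \<sigma> \<epsilon>" for a b
  proof -
    assume a: "a \<in> R" and b: "b \<in> R"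
    have ab: "a + b \<in> R" using a b by (rule Radd)
    have 1: "\<theta> (a + b) - (\<theta> a + \<theta> b) \<in> S" by (rule cs_diff[OF S thS[OF ab] cs_add[OF S thS[OF a] thS[OF b]]])
    have "\<theta> (a + b) - (\<theta> a + \<theta> b) = ((a - \<theta> a) + (b - \<theta> b)) - ((a + b) - \<theta> (a + b))" by (simp add: algebra_simps)
    also have "\<dots> \<in> T" by (rule cs_diff[OF T cs_add[OF T thT[OF a] thT[OF b]] thT[OF ab]])
    finally show ?thesis using 1 ST' by blast
  qed
  have thcirc: "a \<in> R \<Longrightarrow> \<theta> (\<sigma> l * a * l) - \<sigma> l * \<theta> a * l \<in> Kse \<sigma> \<epsilon>" for a l
  proof -
    assume a: "a \<in> R"
    have al: "\<sigma> l * a * l \<in> R" using a by (rule Rcirc)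
    have 1: "\<theta> (\<sigma> l * a * l) - \<sigma> l * \<theta> a * l \<in> S" by (rule cs_diff[OF S thS[OF al] cs_circ[OF S thS[OF a]]])
    have "\<theta> (\<sigma> l * a * l) - \<sigma> l * \<theta> a * l = \<sigma> l * (a - \<theta> a) * l - (\<sigma> l * a * l - \<theta> (\<sigma> l * a * l))"
      by (simp add: algebra_simps)
    also have "\<dots> \<in> T" by (rule cs_diff[OF T cs_circ[OF T thT[OF a]] thT[OF al]])
    finally show ?thesis using 1 ST' by blast
  qed
  have th0: "\<theta> 0 \<in> Kse \<sigma> \<epsilon>"
  proof -
    have 1: "\<theta> 0 \<in> S" by (rule thS[OF R0])
    have "\<theta> 0 = 0 - (0 - \<theta> 0)" by simp
    also have "\<dots> \<in> T" by (rule cs_diff[OF T cs_0[OF T] thT[OF R0]])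
    finally show ?thesis using 1 ST' by blast
  qed
  have VSm: "v \<in> VS S \<longleftrightarrow> snd v \<in> S" for v :: "'v \<times> 'k" by (cases v) (simp add: VS_def)
  have Dd: "?D v = (fst v, \<theta> (?d (fst v)) + snd v)" for v by (simp add: DeltaEE_def)
  have EQ: "VS_eq \<sigma> \<epsilon> v w \<longleftrightarrow> fst v = fst w \<and> snd v - snd w \<in> Kse \<sigma> \<epsilon>" for v w :: "'v \<times> 'k"
    by (simp add: VS_eq_def mod_eq_def)
  have c1: "\<forall>v\<in>VS S. ?D v \<in> VS S"
  proof
    fix v :: "'v \<times> 'k" assume "v \<in> VS S"
    hence s: "snd v \<in> S" unfolding VSm .
    have "snd (?D v) = \<theta> (?d (fst v)) + snd v" unfolding Dd by simp
    also have "\<dots> \<in> S" by (rule cs_add[OF S thS[OF dR] s])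
    finally show "?D v \<in> VS S" unfolding VSm .
  qed
  have c2: "\<forall>v\<in>VS S. \<forall>w\<in>VS S. VS_eq \<sigma> \<epsilon> v w \<longrightarrow> VS_eq \<sigma> \<epsilon> (?D v) (?D w)"
  proof (intro ballI impI)
    fix v w :: "'v \<times> 'k" assume "VS_eq \<sigma> \<epsilon> v w"
    hence 1: "fst v = fst w" and 2: "snd v - snd w \<in> Kse \<sigma> \<epsilon>" unfolding EQ by auto
    have "snd (?D v) - snd (?D w) = snd v - snd w" unfolding Dd using 1 by simp
    thus "VS_eq \<sigma> \<epsilon> (?D v) (?D w)" unfolding EQ using 1 2 by (simp add: Dd)
  qed
  have c3: "\<forall>v\<in>VS S. \<forall>w\<in>VS S. VS_eq \<sigma> \<epsilon> (?D (VS_add v w)) (VS_add (?D v) (?D w))"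
  proof (intro ballI)
    fix v w :: "'v \<times> 'k"
    let ?x = "fst v" and ?y = "fst w"
    have "\<theta> (?d (?x + ?y)) - \<theta> (?d ?x + ?d ?y) \<in> Kse \<sigma> \<epsilon>"
      using thcong[OF dR Radd[OF dR dR] dadd] .
    moreover have "\<theta> (?d ?x + ?d ?y) - (\<theta> (?d ?x) + \<theta> (?d ?y)) \<in> Kse \<sigma> \<epsilon>" using thadd[OF dR dR] .
    ultimately have K: "(\<theta> (?d (?x + ?y)) - \<theta> (?d ?x + ?d ?y)) + (\<theta> (?d ?x + ?d ?y) - (\<theta> (?d ?x) + \<theta> (?d ?y))) \<in> Kse \<sigma> \<epsilon>"
      by (rule Kse_add)
    have f1: "fst (?D (VS_add v w)) = fst (VS_add (?D v) (?D w))" by (simp add: Dd VS_add_def)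
    have "snd (?D (VS_add v w)) - snd (VS_add (?D v) (?D w))
      = (\<theta> (?d (?x + ?y)) - \<theta> (?d ?x + ?d ?y)) + (\<theta> (?d ?x + ?d ?y) - (\<theta> (?d ?x) + \<theta> (?d ?y)))"
      by (simp add: Dd VS_add_def algebra_simps)
    thus "VS_eq \<sigma> \<epsilon> (?D (VS_add v w)) (VS_add (?D v) (?D w))"
      unfolding EQ using f1 K by simp
  qed
  have c4: "\<forall>v\<in>VS S. \<forall>l. VS_eq \<sigma> \<epsilon> (?D (VS_smul \<sigma> smul v l)) (VS_smul \<sigma> smul (?D v) l)"
  proof (intro ballI allI)
    fix v :: "'v \<times> 'k" and l
    have K: "\<theta> (\<sigma> l * ?d (fst v) * l) - \<sigma> l * \<theta> (?d (fst v)) * l \<in> Kse \<sigma> \<epsilon>" using thcirc[OF dR] .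
    have f1: "fst (?D (VS_smul \<sigma> smul v l)) = fst (VS_smul \<sigma> smul (?D v) l)" by (simp add: Dd VS_smul_def)
    have "snd (?D (VS_smul \<sigma> smul v l)) - snd (VS_smul \<sigma> smul (?D v) l)
       = \<theta> (\<sigma> l * ?d (fst v) * l) - \<sigma> l * \<theta> (?d (fst v)) * l"
      by (simp add: Dd VS_smul_def dsm algebra_simps)
    thus "VS_eq \<sigma> \<epsilon> (?D (VS_smul \<sigma> smul v l)) (VS_smul \<sigma> smul (?D v) l)"
      unfolding EQ using f1 K by simp
  qed
  have c5: "\<forall>v\<in>VS S. \<forall>w\<in>VS S. VS_eq \<sigma> \<epsilon> (?D v) (?D w) \<longrightarrow> VS_eq \<sigma> \<epsilon> v w"
  proof (intro ballI impI)
    fix v w :: "'v \<times> 'k" assume "VS_eq \<sigma> \<epsilon> (?D v) (?D w)"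
    hence 1: "fst v = fst w" and 2: "snd (?D v) - snd (?D w) \<in> Kse \<sigma> \<epsilon>" unfolding EQ by (auto simp: Dd)
    have "snd (?D v) - snd (?D w) = snd v - snd w" unfolding Dd using 1 by simp
    thus "VS_eq \<sigma> \<epsilon> v w" unfolding EQ using 1 2 by simp
  qed
  have c6: "\<forall>w\<in>VS S. \<exists>v\<in>VS S. VS_eq \<sigma> \<epsilon> (?D v) w"
  proof
    fix w :: "'v \<times> 'k" assume w: "w \<in> VS S"
    let ?v = "(fst w, snd w - \<theta> (?d (fst w)))"
    have "snd ?v \<in> S" using cs_diff[OF S _ thS[OF dR]] w unfolding VSm by simp
    hence "?v \<in> VS S" unfolding VSm .
    moreover have "?D ?v = w" unfolding Dd by simp
    moreover have "VS_eq \<sigma> \<epsilon> w w" unfolding EQ using Kse0 by simp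
    ultimately show "\<exists>v\<in>VS S. VS_eq \<sigma> \<epsilon> (?D v) w" by metis
  qed
  have c7: "\<forall>s\<in>S. VS_eq \<sigma> \<epsilon> (?D (0, s)) (0, s)"
  proof
    fix s assume "s \<in> S"
    have "?D (0, s) = (0, \<theta> 0 + s)" unfolding Dd using d0 by simp
    thus "VS_eq \<sigma> \<epsilon> (?D (0, s)) (0, s)" unfolding EQ using th0 by simp
  qed
  have c8: "\<forall>v\<in>VS S. mod_eq T (qEST \<sigma> smul f E v) (qEST \<sigma> smul f E' (?D v))"
  proof
    fix v :: "'v \<times> 'k"
    have "qEST \<sigma> smul f E v - qEST \<sigma> smul f E' (?D v) = ?d (fst v) - \<theta> (?d (fst v))"
      unfolding qEST_def Dd deltaEE_def by (simp add: algebra_simps)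
    thus "mod_eq T (qEST \<sigma> smul f E v) (qEST \<sigma> smul f E' (?D v))"
      unfolding mod_eq_def using thT[OF dR] by simp
  qed
  show ?thesis using c1 c2 c3 c4 c5 c6 c7 c8 by blast
qed

end
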